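(* Let $\mathbf{u}$ be a Sturmian sequence over $\{a,b\}$ in which the frequency of $b$ is $\alpha$, and let $\mathbf{v}=\mathrm{colour}(\mathbf{u},1^\omega,\mathbf{b})$, where $\mathbf{b}$ is a Sturmian sequence over $\{2,3\}$ in which the frequency of $3$ is $\gamma$. Suppose $1,\alpha,\alpha\gamma$ are linearly independent over $\mathbb Q$. Then $$\mathcal C_{\mathbf{v}}(n)=P_\alpha(n)+(n+1)\lceil n\alpha\rceil\quad\text{for every integer } n\ge1,$$ and $$\mathcal C^{ab}_{\mathbf{v}}(n)=4\quad\text{for every integer } n\ge\lceil 1/\alpha\rceil.$$
   Context: A Sturmian sequence is an aperiodic (not eventually periodic) $1$-balanced binary sequence, i.e. for any two factors $u,v$ of equal length and each letter $x$, $\bigl||u|_x-|v|_x\bigr|\le1$; letter frequencies in it exist and are irrational. Colouring: given $\mathbf{u}$ over $\{a,b\}$ and sequences $\mathbf{a},\mathbf{b}$ over disjoint alphabets, $\mathrm{colour}(\mathbf{u},\mathbf{a},\mathbf{b})$ is obtained from $\mathbf{u}$ by replacing the subsequence of all occurrences of $a$ (in order) by $\mathbf{a}$ and the subsequence of all occurrences of $b$ (in order) by $\mathbf{b}$; $1^\omega$ is the constant sequence $111\cdots$. $\mathcal C_{\mathbf{v}}(n)$ is the number of distinct factors of length $n$ of $\mathbf{v}$; $\mathcal C^{ab}_{\mathbf{v}}(n)$ is the number of distinct Parikh vectors (vectors of letter counts) of factors of length $n$ of $\mathbf{v}$. For irrational $\alpha\in(0,1)$, $P_\alpha(n)$ denotes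 the number of factors $u$ of length $n$ of a Sturmian sequence over $\{a,b\}$ with frequency of $b$ equal to $\alpha$ such that $(|u|_a,|u|_b)=(\lfloor(1-\alpha)n\rfloor,\lceil n\alpha\rceil)$ (this depends only on $\alpha$). *)

theory Defs
  imports Complex_Main
begin

definition factor_at :: "(nat \<Rightarrow> 'a) \<Rightarrow> nat \<Rightarrow> nat \<Rightarrow> 'a list" where
  "factor_at u i n = map u [i..<i+n]"

definition factors :: "(nat \<Rightarrow> 'a) \<Rightarrow> nat \<Rightarrow> 'a list set" where
  "factors u n = {factor_at u i n | i. True}"

definition factor_complexity :: "(nat \<Rightarrow> 'a) \<Rightarrow> nat \<Rightarrow> nat" where
  "factor_complexity u n = card (factors u n)"

definition parikh :: "'a list \<Rightarrow> ('a \<Rightarrow> nat)" where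
  "parikh w = (\<lambda>x. count_list w x)"

definition abelian_complexity :: "(nat \<Rightarrow> 'a) \<Rightarrow> nat \<Rightarrow> nat" where
  "abelian_complexity u n = card (parikh ` factors u n)"

definition balanced :: "(nat \<Rightarrow> 'a) \<Rightarrow> bool" where
  "balanced u \<longleftrightarrow> (\<forall>n. \<forall>w1\<in>factors u n. \<forall>w2\<in>factors u n. \<forall>x.
      \<bar>int (count_list w1 x) - int (count_list w2 x)\<bar> \<le> 1)"

definition eventually_periodic :: "(nat \<Rightarrow> 'a) \<Rightarrow> bool" where
  "eventually_periodic u \<longleftrightarrow> (\<exists>p>0. \<exists>N. \<forall>i\<ge>N. u (i + p) = u i)"

definition sturmian_over :: "(nat \<Rightarrow> 'a) \<Rightarrow> 'a \<Rightarrow> 'a \<Rightarrow> bool" where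
  "sturmian_over u x y \<longleftrightarrow> x \<noteq> y \<and> range u \<subseteq> {x, y} \<and> balanced u \<and> \<not> eventually_periodic u"

definition has_frequency :: "(nat \<Rightarrow> 'a) \<Rightarrow> 'a \<Rightarrow> real \<Rightarrow> bool" where
  "has_frequency u x f \<longleftrightarrow>
     ((\<lambda>n. real (card {i. i < n \<and> u i = x}) / real n) \<longlonglongrightarrow> f)"

text \<open>colour(u, A, B): the k-th occurrence (counting from 0) of letter a is replaced by A k,
  the k-th occurrence of every other letter (i.e. b) by B k.\<close>
definition colour :: "(nat \<Rightarrow> 'a) \<Rightarrow> 'a \<Rightarrow> (nat \<Rightarrow> 'c) \<Rightarrow> (nat \<Rightarrow> 'c) \<Rightarrow> (nat \<Rightarrow> 'c)" where
  "colour u a A B = (\<lambda>i. if u i = a then A (card {j. j < i \<and> u j = a})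
                         else B (card {j. j < i \<and> u j \<noteq> a}))"

text \<open>P_alpha(n), computed on a Sturmian sequence u over {a,b} with frequency alpha of b
  (the value depends only on alpha).\<close>
definition P_count :: "(nat \<Rightarrow> 'a) \<Rightarrow> 'a \<Rightarrow> 'a \<Rightarrow> real \<Rightarrow> nat \<Rightarrow> nat" where
  "P_count u a b \<alpha> n = card {w \<in> factors u n.
      int (count_list w a) = \<lfloor>(1 - \<alpha>) * real n\<rfloor> \<and> int (count_list w b) = \<lceil>real n * \<alpha>\<rceil>}"

end

theory Submission
  imports Defs "HOL-Analysis.Kronecker_Approximation_Theorem"
begin

lemma indep3:
  fixes \<alpha> \<gamma> :: real
  assumes lin_indep: "\<forall>p q r :: rat. of_rat p + of_rat q * \<alpha> + of_rat r * (\<alpha> * \<gamma>) = 0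
                       \<longrightarrow> p = 0 \<and> q = 0 \<and> r = 0"
  shows "module.independent (\<lambda>r x. of_int r * x) ((\<lambda>i::nat. if i = 0 then \<alpha> else if i = 1 then \<alpha>*\<gamma> else 1) ` {..2})"
    and "inj_on (\<lambda>i::nat. if i = 0 then \<alpha> else if i = 1 then \<alpha>*\<gamma> else 1) {..2}"
proof -
  interpret module "(\<lambda>r x. of_int r * (x::real))"
    by (simp add: Modules.module.intro distrib_left distrib_right mult.commute)
  have ne1: "\<alpha> \<noteq> 1" using lin_indep[rule_format, of "-1" 1 0] by auto
  have ne2: "\<alpha>*\<gamma> \<noteq> 1" using lin_indep[rule_format, of "-1" 0 1] by auto
  have ne3: "\<alpha>*\<gamma> \<noteq> \<alpha>" using lin_indep[rule_format, of "0" "-1" 1] by auto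
  have img: "(\<lambda>i::nat. if i = 0 then \<alpha> else if i = 1 then \<alpha>*\<gamma> else 1) ` {..2} = {\<alpha>, \<alpha>*\<gamma>, 1}"
    by (auto simp: atMost_Suc image_insert)
  show "inj_on (\<lambda>i::nat. if i = 0 then \<alpha> else if i = 1 then \<alpha>*\<gamma> else 1) {..2}"
    using ne1 ne2 ne3 by (auto simp: inj_on_def atMost_Suc)
  show "independent ((\<lambda>i::nat. if i = 0 then \<alpha> else if i = 1 then \<alpha>*\<gamma> else 1) ` {..2})"
    unfolding img
  proof
    assume "dependent {\<alpha>, \<alpha> * \<gamma>, 1}"
    then obtain c where c: "(\<exists>v\<in>{\<alpha>, \<alpha> * \<gamma>, 1}. c v \<noteq> 0)" "(\<Sum>v\<in>{\<alpha>, \<alpha> * \<gamma>, 1}. of_int (c v) * v) = 0"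
      by (subst (asm) dependent_finite) auto
    have "of_int (c \<alpha>) * \<alpha> + of_int (c (\<alpha>*\<gamma>)) * (\<alpha>*\<gamma>) + of_int (c 1) = (0::real)"
      using c(2) ne1 ne2 ne3 by (simp add: algebra_simps)
    hence "of_rat (of_int (c 1)) + of_rat (of_int (c \<alpha>)) * \<alpha> + of_rat (of_int (c (\<alpha>*\<gamma>))) * (\<alpha>*\<gamma>) = 0"
      by (simp add: algebra_simps)
    from lin_indep[rule_format, OF this] have "c 1 = 0" "c \<alpha> = 0" "c (\<alpha>*\<gamma>) = 0" by auto
    with c(1) show False by auto
  qed
qed

lemma kron2:
  fixes \<alpha> \<gamma> \<beta>1 \<beta>2 \<epsilon> :: real
  assumes lin_indep: "\<forall>p q r :: rat. of_rat p + of_rat q * \<alpha> + of_rat r * (\<alpha> * \<gamma>) = 0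
                       \<longrightarrow> p = 0 \<and> q = 0 \<and> r = 0"
    and eps: "\<epsilon> > 0"
  shows "\<exists>i::nat. \<exists>k1::int. \<exists>k2::int. \<bar>real i * \<alpha> - k1 - \<beta>1\<bar> < \<epsilon> \<and> \<bar>real i * (\<alpha>*\<gamma>) - k2 - \<beta>2\<bar> < \<epsilon>"
proof -
  define th where "th = (\<lambda>i::nat. if i = 0 then \<alpha> else if i = 1 then \<alpha>*\<gamma> else 1)"
  define be where "be = (\<lambda>i::nat. if i = 0 then \<beta>1 else \<beta>2)"
  have e2: "\<epsilon>/2 > 0" using eps by simp
  obtain K m where Km: "\<And>i. i < 2 \<Longrightarrow> \<bar>of_int K * th i - of_int (m i) - be i\<bar> < \<epsilon>/2"
    using Kronecker_thm_2[of th 2 "\<epsilon>/2" be] indep3[OF lin_indep] e2 unfolding th_def by auto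
  define N :: nat where "N = nat \<lceil>2 * \<bar>K\<bar> / \<epsilon>\<rceil> + 1"
  have N0: "N > 0" by (simp add: N_def)
  have NK: "real_of_int \<bar>K\<bar> * (1 / N) < \<epsilon>/2"
  proof -
    have "2 * \<bar>K\<bar> / \<epsilon> < N" unfolding N_def by linarith
    hence "2 * \<bar>K\<bar> < N * \<epsilon>" using eps by (simp add: divide_less_eq)
    thus ?thesis using N0 by (simp add: divide_less_eq mult.commute)
  qed
  obtain q p where qp: "0 < q" "\<And>i. i < 2 \<Longrightarrow> \<bar>of_int q * th i - of_int (p i)\<bar> < 1/N"
    using Dirichlet_approx_simult[OF N0, where n=2 and \<theta>=th] by metis
  define K' where "K' = K + \<bar>K\<bar> * q"
  have K'0: "K' \<ge> 0"
  proof (cases "K \<ge> 0")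
    case True thus ?thesis using qp(1) by (simp add: K'_def)
  next
    case False
    hence "\<bar>K\<bar> * q \<ge> \<bar>K\<bar> * 1" using qp(1) by (intro mult_left_mono) auto
    thus ?thesis using False by (simp add: K'_def)
  qed
  have err: "\<bar>of_int K' * th i - of_int (m i + \<bar>K\<bar> * p i) - be i\<bar> < \<epsilon>" if "i < 2" for i
  proof -
    have "of_int K' * th i - of_int (m i + \<bar>K\<bar> * p i) - be i
        = (of_int K * th i - of_int (m i) - be i) + of_int \<bar>K\<bar> * (of_int q * th i - of_int (p i))"
      by (simp add: K'_def algebra_simps)
    also have "\<bar>\<dots>\<bar> \<le> \<bar>of_int K * th i - of_int (m i) - be i\<bar> + of_int \<bar>K\<bar> * \<bar>of_int q * th i - of_int (p i)\<bar>"
      by (simp add: abs_mult abs_triangle_ineq[THEN order_trans])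
    also have "of_int \<bar>K\<bar> * \<bar>of_int q * th i - of_int (p i)\<bar> \<le> of_int \<bar>K\<bar> * (1/N)"
      using qp(2)[OF that] by (intro mult_left_mono) auto
    finally show ?thesis using Km[OF that] NK by linarith
  qed
  show ?thesis
    apply (rule exI[of _ "nat K'"], rule exI[of _ "m 0 + \<bar>K\<bar> * p 0"], rule exI[of _ "m 1 + \<bar>K\<bar> * p 1"])
    using err[of 0] err[of 1] K'0 by (simp add: th_def be_def)
qed

lemma order_stat:
  fixes F :: "real set"
  assumes "finite F" "F \<subseteq> {lo<..<hi}" "k \<le> card F" "lo < hi"
  shows "\<exists>t. lo < t \<and> t < hi \<and> t \<notin> F \<and> card {c\<in>F. t < c} = k"
  using assms
proof (induction "card F" arbitrary: F hi k)
  case 0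
  hence "F = {}" by auto
  thus ?case using 0 by (intro exI[of _ "(lo+hi)/2"]) auto
next
  case (Suc n)
  hence Fne: "F \<noteq> {}" by auto
  define M where "M = Max F"
  have MF: "M \<in> F" using Suc Fne by (simp add: M_def)
  have Mle: "c \<le> M" if "c \<in> F" for c using Suc that by (simp add: M_def)
  define F' where "F' = F - {M}"
  have cF': "card F' = n" using Suc MF by (simp add: F'_def)
  have F'sub: "F' \<subseteq> {lo<..<M}" using Suc.prems(2) Mle by (force simp: F'_def)
  have loM: "lo < M" using MF Suc.prems(2) by auto
  have Mhi: "M < hi" using MF Suc.prems(2) by auto
  show ?case
  proof (cases k)
    case 0
    have "{c\<in>F. (M+hi)/2 < c} = {}" using Mle Mhi by force
    moreover have "(M+hi)/2 \<notin> F" using Mle Mhi by force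
    ultimately show ?thesis using 0 Mhi loM by (intro exI[of _ "(M+hi)/2"]) (simp only: card.empty, auto)
  next
    case (Suc k')
    have "k' \<le> card F'" using Suc Suc.prems(3) Suc.hyps(2) cF' by simp
    from Suc.hyps(1)[OF cF'[symmetric] _ F'sub this loM] Suc.prems(1)
    obtain t where t: "lo < t" "t < M" "t \<notin> F'" "card {c\<in>F'. t < c} = k'"
      by (auto simp: F'_def)
    have eq: "{c\<in>F. t < c} = insert M {c\<in>F'. t < c}" using MF t(2) by (auto simp: F'_def)
    have "M \<notin> {c\<in>F'. t < c}" by (simp add: F'_def)
    hence "card {c\<in>F. t < c} = Suc k'" unfolding eq using t(4) Suc.prems(1)
      by (subst card_insert_disjoint) (auto simp: F'_def)
    thus ?thesis using t Mhi Suc by (intro exI[of _ t]) (auto simp: F'_def)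
  qed
qed

lemma card_image_cong:
  assumes "\<And>x y. x \<in> S \<Longrightarrow> y \<in> S \<Longrightarrow> f x = f y \<longleftrightarrow> g x = g y"
  shows "card (f ` S) = card (g ` S)"
proof -
  define h where "h = (\<lambda>z. g (inv_into S f z))"
  have "inj_on h (f ` S)"
  proof (rule inj_onI)
    fix z1 z2 assume "z1 \<in> f ` S" "z2 \<in> f ` S" "h z1 = h z2"
    then obtain x1 x2 where "x1 \<in> S" "x2 \<in> S" "z1 = f x1" "z2 = f x2" "h z1 = h z2" by auto
    thus "z1 = z2" using assms[of "inv_into S f (f x1)" "inv_into S f (f x2)"]
      by (simp add: h_def inv_into_into f_inv_into_f)
  qed
  moreover have "h ` f ` S = g ` S"
  proof -
    have "h (f x) = g x" if "x \<in> S" for x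
      using assms[of "inv_into S f (f x)" x] that by (simp add: h_def inv_into_into f_inv_into_f)
    thus ?thesis by (force simp: image_image)
  qed
  ultimately show ?thesis by (metis card_image)
qed

definition G :: "real \<Rightarrow> real \<Rightarrow> nat \<Rightarrow> int" where
  "G \<theta> t m = \<lceil>real m * \<theta> - t\<rceil>"

definition code :: "real \<Rightarrow> real \<Rightarrow> nat \<Rightarrow> bool list" where
  "code \<theta> t n = map (\<lambda>m. G \<theta> t (Suc m) \<noteq> G \<theta> t m) [0..<n]"

definition gen :: "real \<Rightarrow> nat \<Rightarrow> real \<Rightarrow> bool" where
  "gen \<theta> n t \<longleftrightarrow> 0 < t \<and> t < 1 \<and> (\<forall>m\<in>{1..n}. t \<noteq> frac (real m * \<theta>))"

lemma irr_mult_not_int: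
  assumes "\<theta> \<notin> \<rat>" "m \<noteq> 0"
  shows "real m * \<theta> \<notin> \<int>"
proof
  assume "real m * \<theta> \<in> \<int>"
  then obtain z where "real m * \<theta> = of_int z" by (auto elim: Ints_cases)
  hence "\<theta> = of_int z / of_nat m" using assms(2) by (simp add: field_simps)
  hence "\<theta> \<in> \<rat>" by simp
  thus False using assms by simp
qed

lemma frac_pos_irr:
  assumes "\<theta> \<notin> \<rat>" "m \<noteq> 0"
  shows "0 < frac (real m * \<theta>)"
proof -
  have "frac (real m * \<theta>) \<noteq> 0" using irr_mult_not_int[OF assms] by (simp add: frac_eq_0_iff)
  moreover have "frac (real m * \<theta>) \<ge> 0" by (rule frac_ge_0)
  ultimately show ?thesis by linarith
qed

lemma frac_inj_irr:
  assumes "\<theta> \<notin> \<rat>" "frac (real m1 * \<theta>) = frac (real m2 * \<theta>)"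
  shows "m1 = m2"
proof (rule ccontr)
  assume ne: "m1 \<noteq> m2"
  have "real m1 * \<theta> - real m2 * \<theta> \<in> \<int>"
  proof -
    have "real m1 * \<theta> - real m2 * \<theta> = of_int (\<lfloor>real m1 * \<theta>\<rfloor> - \<lfloor>real m2 * \<theta>\<rfloor>)"
      using assms(2) unfolding frac_def by simp
    thus ?thesis by (simp only: Ints_of_int)
  qed
  hence "(of_int (int m1 - int m2)) * \<theta> \<in> \<int>" by (simp add: algebra_simps)
  then obtain z where z: "(of_int (int m1 - int m2)) * \<theta> = of_int z" by (auto elim: Ints_cases)
  have "int m1 - int m2 \<noteq> 0" using ne by simp
  hence "\<theta> = of_int z / of_int (int m1 - int m2)" using z by (simp add: field_simps)
  hence "\<theta> \<in> \<rat>" by simp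
  thus False using assms by simp
qed

lemma G_eq:
  assumes "0 < t" "t < 1" "t \<noteq> frac (real m * \<theta>)"
  shows "G \<theta> t m = \<lfloor>real m * \<theta>\<rfloor> + (if t < frac (real m * \<theta>) then 1 else 0)"
proof -
  define f where "f = frac (real m * \<theta>)"
  have f: "real m * \<theta> = \<lfloor>real m * \<theta>\<rfloor> + f" by (simp add: frac_def f_def)
  have f01: "0 \<le> f" "f < 1" by (auto simp: frac_lt_1 f_def)
  show ?thesis
  proof (cases "t < f")
    case True
    have "G \<theta> t m = \<lfloor>real m * \<theta>\<rfloor> + 1" unfolding G_def
      by (rule ceiling_unique) (use f f01 True assms in linarith)+
    thus ?thesis using True by (simp add: f_def)
  next
    case False
    hence "f < t" using assms(3) by (simp add: f_def)
    have "G \<theta> t m = \<lfloor>real m * \<theta>\<rfloor>" unfolding G_def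
      by (rule ceiling_unique) (use f f01 \<open>f < t\<close> assms in linarith)+
    thus ?thesis using False by (simp add: f_def)
  qed
qed

lemma G0: "0 < t \<Longrightarrow> t < 1 \<Longrightarrow> G \<theta> t 0 = 0"
  unfolding G_def by (auto intro!: ceiling_unique)

lemma G_step:
  assumes "0 < \<theta>" "\<theta> < 1"
  shows "G \<theta> t (Suc m) = G \<theta> t m \<or> G \<theta> t (Suc m) = G \<theta> t m + 1"
proof -
  define x where "x = real m * \<theta> - t"
  have e: "real (Suc m) * \<theta> - t = x + \<theta>" by (simp add: algebra_simps x_def)
  have "x + \<theta> \<le> of_int (\<lceil>x\<rceil> + 1)"
    using assms le_of_int_ceiling[of x] by linarith
  hence a: "\<lceil>x + \<theta>\<rceil> \<le> \<lceil>x\<rceil> + 1" by (simp add: ceiling_le_iff)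
  have b: "\<lceil>x\<rceil> \<le> \<lceil>x + \<theta>\<rceil>" using assms by (intro ceiling_mono) simp
  show ?thesis using a b unfolding G_def e x_def[symmetric] by linarith
qed

lemma code_Suc: "code \<theta> t (Suc n) = code \<theta> t n @ [G \<theta> t (Suc n) \<noteq> G \<theta> t n]"
  by (simp add: code_def)

lemma code_count:
  assumes "0 < \<theta>" "\<theta> < 1" "0 < t" "t < 1"
  shows "int (count_list (code \<theta> t n) True) = G \<theta> t n"
proof (induction n)
  case 0 thus ?case using G0 assms by (simp add: code_def)
next
  case (Suc n) thus ?case using G_step[OF assms(1,2), of t n] by (auto simp: code_Suc)
qed

lemma code_take: "m \<le> n \<Longrightarrow> take m (code \<theta> t n) = code \<theta> t m"
  by (simp add: code_def take_map)

lemma code_eq_iff: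
  assumes "0 < \<theta>" "\<theta> < 1" "gen \<theta> n t" "gen \<theta> n t'"
  shows "code \<theta> t n = code \<theta> t' n \<longleftrightarrow>
     {m\<in>{1..n}. t < frac (real m * \<theta>)} = {m\<in>{1..n}. t' < frac (real m * \<theta>)}"
proof
  assume eq: "code \<theta> t n = code \<theta> t' n"
  have "G \<theta> t m = G \<theta> t' m" if "m \<le> n" for m
    using code_count[OF assms(1,2), of t m] code_count[OF assms(1,2), of t' m]
      code_take[OF that, of \<theta> t] code_take[OF that, of \<theta> t'] eq assms(3,4)
    by (metis gen_def)
  have "t < frac (real x * \<theta>) \<longleftrightarrow> t' < frac (real x * \<theta>)" if "x \<in> {1..n}" for x
    using G_eq[of t x \<theta>] G_eq[of t' x \<theta>] \<open>\<And>m. m \<le> n \<Longrightarrow> G \<theta> t m = G \<theta> t' m\<close>[of x]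
      assms(3,4) that unfolding gen_def by (auto split: if_splits)
  thus "{m\<in>{1..n}. t < frac (real m * \<theta>)} = {m\<in>{1..n}. t' < frac (real m * \<theta>)}"
    by blast
next
  assume eq: "{m\<in>{1..n}. t < frac (real m * \<theta>)} = {m\<in>{1..n}. t' < frac (real m * \<theta>)}"
  have "G \<theta> t m = G \<theta> t' m" if "m \<le> n" for m
  proof (cases "m = 0")
    case True thus ?thesis using assms G0 by (simp add: gen_def)
  next
    case False
    hence "m \<in> {1..n}" using that by auto
    thus ?thesis using eq assms(3,4) unfolding gen_def by (auto simp: G_eq)
  qed
  thus "code \<theta> t n = code \<theta> t' n" by (simp add: code_def)
qed

definition codes :: "real \<Rightarrow> nat \<Rightarrow> bool list set" where
  "codes \<theta> n = (\<lambda>t. code \<theta> t n) ` {t. gen \<theta> n t}"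

lemma card_codes:
  assumes "0 < \<theta>" "\<theta> < 1" "\<theta> \<notin> \<rat>"
  shows "card (codes \<theta> n) = n + 1"
proof -
  define A where "A = (\<lambda>t. {m\<in>{1..n}. t < frac (real m * \<theta>)})"
  define Gs where "Gs = {t. gen \<theta> n t}"
  have "card (codes \<theta> n) = card (A ` Gs)"
    unfolding codes_def Gs_def A_def by (rule card_image_cong) (use code_eq_iff[OF assms(1,2)] in auto)
  also have "\<dots> = card (card ` A ` Gs)"
  proof (rule card_image[symmetric], rule inj_onI)
    fix X Y assume "X \<in> A ` Gs" "Y \<in> A ` Gs" and c: "card X = card Y"
    then obtain t t' where X: "X = A t" and Y: "Y = A t'" by auto
    have fin: "finite (A t)" "finite (A t')" by (auto simp: A_def)
    show "X = Y"
    proof (cases "t \<le> t'")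
      case True
      hence "A t' \<subseteq> A t" by (auto simp: A_def)
      thus ?thesis using card_subset_eq[OF fin(1)] c X Y by metis
    next
      case False
      hence "A t \<subseteq> A t'" by (auto simp: A_def)
      thus ?thesis using card_subset_eq[OF fin(2)] c X Y by metis
    qed
  qed
  also have "card ` A ` Gs = {0..n}"
  proof
    define f where "f = (\<lambda>m::nat. frac (real m * \<theta>))"
    have injf: "inj_on f {1..n}" using frac_inj_irr[OF assms(3)] by (auto simp: inj_on_def f_def)
    have cA: "card (A t) = card {c\<in>f ` {1..n}. t < c}" for t
    proof -
      have "{c\<in>f ` {1..n}. t < c} = f ` A t" by (auto simp: A_def f_def)
      moreover have "A t \<subseteq> {1..n}" by (auto simp: A_def)
      ultimately show ?thesis using card_image[OF inj_on_subset[OF injf]] by metis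
    qed
    show "card ` A ` Gs \<subseteq> {0..n}"
    proof
      fix k assume "k \<in> card ` A ` Gs"
      then obtain t where "k = card (A t)" by auto
      moreover have "A t \<subseteq> {1..n}" by (auto simp: A_def)
      ultimately show "k \<in> {0..n}" by (metis atLeastAtMost_iff card_mono finite_atLeastAtMost card_atLeastAtMost diff_Suc_1 zero_le)
    qed
    show "{0..n} \<subseteq> card ` A ` Gs"
    proof
      fix k assume k: "k \<in> {0..n}"
      have sub: "f ` {1..n} \<subseteq> {0<..<1}"
        using frac_pos_irr[OF assms(3)] by (auto simp: f_def frac_lt_1)
      have "k \<le> card (f ` {1..n})" using k card_image[OF injf] by simp
      from order_stat[OF _ sub this] obtain t where t: "0 < t" "t < 1" "t \<notin> f ` {1..n}"
        "card {c\<in>f ` {1..n}. t < c} = k" by auto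
      have "t \<in> Gs" using t unfolding Gs_def gen_def f_def by auto
      thus "k \<in> card ` A ` Gs" using t(4) cA by (metis image_eqI)
    qed
  qed
  finally show ?thesis by simp
qed

lemma codes_count:
  assumes "0 < \<theta>" "\<theta> < 1" "\<theta> \<notin> \<rat>" "w \<in> codes \<theta> n"
  shows "int (count_list w True) = \<lfloor>real n * \<theta>\<rfloor> \<or> int (count_list w True) = \<lfloor>real n * \<theta>\<rfloor> + 1"
proof -
  obtain t where t: "gen \<theta> n t" "w = code \<theta> t n" using assms(4) by (auto simp: codes_def)
  show ?thesis
  proof (cases "n = 0")
    case True thus ?thesis using t by (simp add: code_def)
  next
    case False
    hence "t \<noteq> frac (real n * \<theta>)" using t(1) by (auto simp: gen_def)
    thus ?thesis using code_count[OF assms(1,2), of t n] G_eq[of t n \<theta>] t by (auto simp: gen_def)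
  qed
qed

lemma codes_count_realized:
  assumes "0 < \<theta>" "\<theta> < 1" "\<theta> \<notin> \<rat>" "n \<ge> 1"
  shows "\<exists>w\<in>codes \<theta> n. int (count_list w True) = \<lfloor>real n * \<theta>\<rfloor>"
    and "\<exists>w\<in>codes \<theta> n. int (count_list w True) = \<lfloor>real n * \<theta>\<rfloor> + 1"
proof -
  define f where "f = (\<lambda>m::nat. frac (real m * \<theta>))"
  have injf: "inj_on f {1..n}" using frac_inj_irr[OF assms(3)] by (auto simp: inj_on_def f_def)
  have sub: "f ` {1..n} \<subseteq> {0<..<1}"
    using frac_pos_irr[OF assms(3)] by (auto simp: f_def frac_lt_1)
  have fin: "finite (f ` {1..n})" by simp
  obtain t where t: "0 < t" "t < 1" "t \<notin> f ` {1..n}" "card {c\<in>f ` {1..n}. t < c} = 0"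
    using order_stat[OF fin sub, of 0] by auto
  have g: "gen \<theta> n t" using t by (auto simp: gen_def f_def)
  have "\<not> t < f n"
  proof
    assume "t < f n"
    hence "f n \<in> {c\<in>f ` {1..n}. t < c}" using assms(4) by auto
    moreover have "finite {c\<in>f ` {1..n}. t < c}" using fin by simp
    ultimately show False using t(4) by (metis card_0_eq empty_iff)
  qed
  moreover have "t \<noteq> f n" using t(3) assms(4) by auto
  ultimately have "G \<theta> t n = \<lfloor>real n * \<theta>\<rfloor>" using G_eq[of t n \<theta>] t(1,2) by (simp add: f_def)
  thus "\<exists>w\<in>codes \<theta> n. int (count_list w True) = \<lfloor>real n * \<theta>\<rfloor>"
    using code_count[OF assms(1,2) t(1,2), of n] g by (auto simp: codes_def)
  obtain t where t: "0 < t" "t < 1" "t \<notin> f ` {1..n}" "card {c\<in>f ` {1..n}. t < c} = card (f ` {1..n})"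
    using order_stat[OF fin sub, of "card (f ` {1..n})"] by auto
  have g: "gen \<theta> n t" using t by (auto simp: gen_def f_def)
  have "{c\<in>f ` {1..n}. t < c} = f ` {1..n}" using card_subset_eq[OF fin _ t(4)] by auto
  hence "t < f n" using assms(4) by auto
  moreover have "t \<noteq> f n" using t(3) assms(4) by auto
  ultimately have "G \<theta> t n = \<lfloor>real n * \<theta>\<rfloor> + 1" using G_eq[of t n \<theta>] t(1,2) by (simp add: f_def)
  thus "\<exists>w\<in>codes \<theta> n. int (count_list w True) = \<lfloor>real n * \<theta>\<rfloor> + 1"
    using code_count[OF assms(1,2) t(1,2), of n] g by (auto simp: codes_def)
qed

definition S :: "(nat \<Rightarrow> bool) \<Rightarrow> nat \<Rightarrow> nat" where
  "S p i = count_list (map p [0..<i]) True"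

definition W :: "(nat \<Rightarrow> bool) \<Rightarrow> nat \<Rightarrow> nat \<Rightarrow> nat" where
  "W p i m = count_list (map p [i..<i+m]) True"

lemma S_add: "S p (i+m) = S p i + W p i m"
proof -
  have "[0..<i+m] = [0..<i] @ [i..<i+m]" using upt_add_eq_append[of 0 i m] by simp
  thus ?thesis unfolding S_def W_def by simp
qed

lemma W_Suc: "W p i (Suc m) = W p i m + (if p (i+m) then 1 else 0)"
  unfolding W_def by simp

lemma W_0[simp]: "W p i 0 = 0" by (simp add: W_def)

lemma S_le: "S p n \<le> n"
  unfolding S_def using count_le_length[of "map p [0..<n]" True] by simp

lemma S_card: "S p n = card {i. i < n \<and> p i}"
proof (induction n)
  case 0 thus ?case by (simp add: S_def)
next
  case (Suc n)
  have "{i. i < Suc n \<and> p i} = (if p n then insert n {i. i < n \<and> p i} else {i. i < n \<and> p i})"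
    by (auto simp: less_Suc_eq)
  thus ?case using Suc by (auto simp: S_def)
qed

lemma ceil_stable:
  fixes x \<tau> t :: real and c :: int
  assumes "0 < \<tau>" "\<tau> < 1" "0 < t" "t < 1" "\<bar>\<tau> - t\<bar> < \<bar>t - frac x\<bar>"
    "c - 1 \<le> x - \<tau>" "x - \<tau> \<le> c"
  shows "\<lceil>x - t\<rceil> = c"
proof (rule ceiling_unique)
  show "x - t \<le> of_int c"
  proof (rule ccontr)
    assume "\<not> x - t \<le> of_int c"
    hence a: "t < x - c" "x - c \<le> \<tau>" using assms by auto
    hence "frac x = x - c" using assms by (intro frac_unique_iff[THEN iffD2]) auto
    thus False using a assms(5) by auto
  qed
  show "of_int c - 1 < x - t"
  proof (rule ccontr)
    assume "\<not> of_int c - 1 < x - t"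
    hence a: "x - (c - 1) \<le> t" "\<tau> \<le> x - (c - 1)" using assms by auto
    hence "frac x = x - (c - 1)" using assms by (intro frac_unique_iff[THEN iffD2]) auto
    thus False using a assms(5) by auto
  qed
qed

lemma finite_pos_min:
  fixes f :: "nat \<Rightarrow> real"
  assumes "\<And>m. m \<le> n \<Longrightarrow> 0 < f m"
  shows "\<exists>\<eta>>0. \<forall>m\<le>n. \<eta> \<le> f m"
proof -
  define \<eta> where "\<eta> = Min (f ` {..n})"
  have "\<eta> \<in> f ` {..n}" unfolding \<eta>_def by (intro Min_in) auto
  hence "\<eta> > 0" using assms by auto
  moreover have "\<forall>m\<le>n. \<eta> \<le> f m" unfolding \<eta>_def by (auto intro: Min_le)
  ultimately show ?thesis by blast
qed

locale sseq =
  fixes p :: "nat \<Rightarrow> bool" and \<theta> :: real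
  assumes bal: "\<And>i j m. W p i m \<le> W p j m + 1"
    and freq: "(\<lambda>n. real (S p n) / real n) \<longlonglongrightarrow> \<theta>"
    and irr: "\<theta> \<notin> \<rat>"
begin

lemma theta_bounds: "0 < \<theta>" "\<theta> < 1"
proof -
  have "0 \<le> \<theta>" by (rule tendsto_lowerbound[OF freq]) auto
  moreover have "\<theta> \<le> 1"
    by (rule tendsto_upperbound[OF freq]) (auto intro!: always_eventually simp: S_le divide_le_eq_1)
  moreover have "\<theta> \<noteq> 0" "\<theta> \<noteq> 1" using irr by auto
  ultimately show "0 < \<theta>" "\<theta> < 1" by auto
qed

lemma S_mult_bounds:
  "S p (N*m) \<le> N * (W p i m + 1)" "N * W p i m \<le> S p (N*m) + N"
proof (induction N)
  case 0 { case 1 show ?case by (simp add: S_def) next case 2 show ?case by simp }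
next
  case (Suc N)
  have e: "S p (Suc N * m) = S p (N*m) + W p (N*m) m" using S_add[of p "N*m" m] by (simp add: add.commute)
  { case 1 show ?case using Suc.IH(1) bal[of "N*m" m i] e by simp
  next case 2 show ?case using Suc.IH(2) bal[of i m "N*m"] e by simp }
qed

lemma win_bound:
  assumes "m > 0"
  shows "\<bar>real (W p i m) - real m * \<theta>\<bar> < 1"
proof -
  have lim: "(\<lambda>N. real (S p (N*m)) / real (N*m)) \<longlonglongrightarrow> \<theta>"
  proof -
    have "strict_mono (\<lambda>N::nat. N*m)" using assms by (auto simp: strict_mono_def)
    from LIMSEQ_subseq_LIMSEQ[OF freq this] show ?thesis by (simp add: o_def)
  qed
  have up: "\<theta> \<le> (real (W p i m) + 1) / real m"
  proof (rule tendsto_upperbound[OF lim])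
    show "\<forall>\<^sub>F N in sequentially. real (S p (N*m)) / real (N*m) \<le> (real (W p i m) + 1) / real m"
    proof (rule eventually_sequentiallyI[of 1])
      fix N :: nat assume "1 \<le> N"
      have "real (S p (N*m)) \<le> real N * (real (W p i m) + 1)"
        using S_mult_bounds(1)[of N m i] by (metis of_nat_1 of_nat_add of_nat_le_iff of_nat_mult)
      thus "real (S p (N*m)) / real (N*m) \<le> (real (W p i m) + 1) / real m"
        using \<open>1 \<le> N\<close> assms by (simp add: divide_simps mult_ac)
    qed
  qed simp
  have lo: "(real (W p i m) - 1) / real m \<le> \<theta>"
  proof (rule tendsto_lowerbound[OF lim])
    show "\<forall>\<^sub>F N in sequentially. (real (W p i m) - 1) / real m \<le> real (S p (N*m)) / real (N*m)"
    proof (rule eventually_sequentiallyI[of 1])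
      fix N :: nat assume "1 \<le> N"
      have "real N * real (W p i m) \<le> real (S p (N*m)) + real N"
        using S_mult_bounds(2)[of N i m] by (metis of_nat_add of_nat_le_iff of_nat_mult)
      hence "real N * real (W p i m) * real m \<le> (real (S p (N*m)) + real N) * real m"
        by (rule mult_right_mono) simp
      thus "(real (W p i m) - 1) / real m \<le> real (S p (N*m)) / real (N*m)"
        using \<open>1 \<le> N\<close> assms by (simp add: divide_simps mult_ac algebra_simps)
    qed
  qed simp
  have a: "real (W p i m) - 1 \<le> real m * \<theta>" "real m * \<theta> \<le> real (W p i m) + 1"
    using up lo assms by (simp_all add: divide_simps mult_ac)
  have "real m * \<theta> \<notin> \<int>" using irr_mult_not_int[OF irr] assms by simp
  hence "real m * \<theta> \<noteq> real (W p i m) - 1" "real m * \<theta> \<noteq> real (W p i m) + 1"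
    by (metis Ints_diff Ints_add Ints_of_nat Ints_1)+
  thus ?thesis using a by linarith
qed

definition d :: "nat \<Rightarrow> real" where "d i = real (S p i) - real i * \<theta>"

lemma d_add: "d (i+m) = d i + real (W p i m) - real m * \<theta>"
  unfolding d_def by (simp add: S_add algebra_simps)

lemma d_diff: "\<bar>d j - d i\<bar> < 1"
proof (cases "i \<le> j")
  case True
  then obtain m where j: "j = i + m" by (metis le_add_diff_inverse)
  show ?thesis
  proof (cases "m = 0")
    case True thus ?thesis using j by simp
  next
    case False thus ?thesis using win_bound[of m i] j d_add[of i m] by simp
  qed
next
  case False
  then obtain m where j: "i = j + m" "m > 0" by (metis less_imp_add_positive not_le)
  thus ?thesis using win_bound[of m j] d_add[of j m] by simp
qed

definition L :: real where "L = Inf (range d)"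

lemma bdd: "bdd_below (range d)"
proof (rule bdd_belowI[of _ "d 0 - 1"])
  fix x assume "x \<in> range d"
  then obtain j where "x = d j" by auto
  thus "d 0 - 1 \<le> x" using d_diff[of j 0] by linarith
qed

definition \<tau> :: "nat \<Rightarrow> real" where "\<tau> i = d i - L"

lemma tau_bounds: "0 \<le> \<tau> i" "\<tau> i \<le> 1"
proof -
  show "0 \<le> \<tau> i" unfolding \<tau>_def L_def using cInf_lower[OF _ bdd, of "d i"] by simp
  have "d i - 1 \<le> L" unfolding L_def
  proof (rule cInf_greatest)
    show "range d \<noteq> {}" by simp
    fix x assume "x \<in> range d"
    then obtain j where "x = d j" by auto
    thus "d i - 1 \<le> x" using d_diff[of j i] by linarith
  qed
  thus "\<tau> i \<le> 1" unfolding \<tau>_def by simp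
qed

lemma tau_add: "\<tau> (i+m) = \<tau> i + real (W p i m) - real m * \<theta>"
  unfolding \<tau>_def using d_add by simp

lemma code_of_W:
  assumes "\<And>m. m \<le> n \<Longrightarrow> int (W p i m) = G \<theta> t m"
  shows "map p [i..<i+n] = code \<theta> t n"
proof (rule nth_equalityI)
  show "length (map p [i..<i+n]) = length (code \<theta> t n)" by (simp add: code_def)
  fix m assume "m < length (map p [i..<i+n])"
  hence m: "m < n" by simp
  have "p (i+m) \<longleftrightarrow> W p i (Suc m) \<noteq> W p i m" using W_Suc[of p i m] by simp
  also have "\<dots> \<longleftrightarrow> int (W p i (Suc m)) \<noteq> int (W p i m)" by simp
  also have "\<dots> \<longleftrightarrow> G \<theta> t (Suc m) \<noteq> G \<theta> t m" using assms[of m] assms[of "Suc m"] m by simp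
  finally show "map p [i..<i+n] ! m = code \<theta> t n ! m" using m by (simp add: code_def)
qed

lemma cover: "\<exists>t. gen \<theta> n t \<and> map p [i..<i+n] = code \<theta> t n"
proof -
  have side: "(\<forall>m\<le>n. 0 < \<tau> (i+m)) \<or> (\<forall>m\<le>n. \<tau> (i+m) < 1)"
  proof (rule ccontr)
    assume "\<not> ?thesis"
    then obtain m1 m2 where "\<tau> (i+m1) \<le> 0" "1 \<le> \<tau> (i+m2)" by (meson not_le)
    hence "\<tau> (i+m1) = 0" "\<tau> (i+m2) = 1" using tau_bounds by (auto intro: antisym)
    hence "d (i+m2) - d (i+m1) = 1" by (simp add: \<tau>_def)
    thus False using d_diff[of "i+m2" "i+m1"] by simp
  qed
  have "\<exists>t. \<forall>m\<le>n. 0 < t - real m * \<theta> + real (W p i m) \<and> t - real m * \<theta> + real (W p i m) < 1"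
  proof (cases "\<forall>m\<le>n. 0 < \<tau> (i+m)")
    case True
    from finite_pos_min[of n "\<lambda>m. \<tau> (i+m)"] True obtain \<eta> where \<eta>: "\<eta> > 0" "\<forall>m\<le>n. \<eta> \<le> \<tau> (i+m)" by auto
    show ?thesis
    proof (rule exI[of _ "\<tau> i - \<eta>/2"], intro allI impI)
      fix m assume "m \<le> n"
      thus "0 < \<tau> i - \<eta> / 2 - real m * \<theta> + real (W p i m) \<and> \<tau> i - \<eta> / 2 - real m * \<theta> + real (W p i m) < 1"
        using \<eta> tau_add[of i m] tau_bounds[of "i+m"] by auto
    qed
  next
    case False
    with side have all: "\<forall>m\<le>n. 0 < 1 - \<tau> (i+m)" by auto
    from finite_pos_min[of n "\<lambda>m. 1 - \<tau> (i+m)"] all obtain \<eta> where \<eta>: "\<eta> > 0" "\<forall>m\<le>n. \<eta> \<le> 1 - \<tau> (i+m)" by auto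
    show ?thesis
    proof (rule exI[of _ "\<tau> i + \<eta>/2"], intro allI impI)
      fix m assume "m \<le> n"
      thus "0 < \<tau> i + \<eta> / 2 - real m * \<theta> + real (W p i m) \<and> \<tau> i + \<eta> / 2 - real m * \<theta> + real (W p i m) < 1"
        using \<eta> tau_add[of i m] tau_bounds[of "i+m"] by auto
    qed
  qed
  then obtain t where t: "\<And>m. m \<le> n \<Longrightarrow> 0 < t - real m * \<theta> + real (W p i m) \<and> t - real m * \<theta> + real (W p i m) < 1"
    by blast
  have t01: "0 < t" "t < 1" using t[of 0] by auto
  have WG: "int (W p i m) = G \<theta> t m" if "m \<le> n" for m
    unfolding G_def by (rule ceiling_unique[symmetric]) (use t[OF that] in auto)
  have "gen \<theta> n t"
    unfolding gen_def
  proof (intro conjI t01 ballI)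
    fix m assume m: "m \<in> {1..n}"
    show "t \<noteq> frac (real m * \<theta>)"
    proof
      assume "t = frac (real m * \<theta>)"
      hence "t - real m * \<theta> + real (W p i m) = of_int (int (W p i m) - \<lfloor>real m * \<theta>\<rfloor>)"
        by (simp add: frac_def)
      moreover have "0 < t - real m * \<theta> + real (W p i m)" "t - real m * \<theta> + real (W p i m) < 1"
        using t[of m] m by auto
      ultimately have "0 < int (W p i m) - \<lfloor>real m * \<theta>\<rfloor>" "int (W p i m) - \<lfloor>real m * \<theta>\<rfloor> < 1"
        by (metis of_int_0_less_iff, metis of_int_less_1_iff)
      thus False by linarith
    qed
  qed
  thus ?thesis using code_of_W[OF WG] by blast
qed

lemma realize:
  assumes g: "gen \<theta> n t"
  shows "\<exists>\<delta>>0. \<delta> \<le> t \<and> \<delta> \<le> 1 - t \<and> (\<forall>i. \<bar>\<tau> i - t\<bar> < \<delta> \<longrightarrow> map p [i..<i+n] = code \<theta> t n)"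
proof -
  have t01: "0 < t" "t < 1" using g by (auto simp: gen_def)
  define D where "D = {t, 1 - t} \<union> (\<lambda>m. \<bar>t - frac (real m * \<theta>)\<bar>) ` {1..n}"
  define \<delta> where "\<delta> = Min D"
  have finD: "finite D" "D \<noteq> {}" by (auto simp: D_def)
  have "\<delta> \<in> D" unfolding \<delta>_def using finD by (rule Min_in)
  hence pos: "\<delta> > 0" using t01 g by (auto simp: D_def gen_def)
  have le: "\<delta> \<le> x" if "x \<in> D" for x unfolding \<delta>_def using finD that by auto
  have "\<delta> \<le> t" "\<delta> \<le> 1 - t" using le by (auto simp: D_def)
  moreover have "map p [i..<i+n] = code \<theta> t n" if close: "\<bar>\<tau> i - t\<bar> < \<delta>" for i
  proof (rule code_of_W)
    fix m assume m: "m \<le> n"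
    have ti: "0 < \<tau> i" "\<tau> i < 1" using close \<open>\<delta> \<le> t\<close> \<open>\<delta> \<le> 1 - t\<close> by auto
    show "int (W p i m) = G \<theta> t m"
    proof (cases "m = 0")
      case True thus ?thesis using G0 t01 by simp
    next
      case False
      hence "m \<in> {1..n}" using m by auto
      hence "\<delta> \<le> \<bar>t - frac (real m * \<theta>)\<bar>" using le by (auto simp: D_def)
      hence "\<bar>\<tau> i - t\<bar> < \<bar>t - frac (real m * \<theta>)\<bar>" using close by simp
      moreover have "0 \<le> \<tau> (i+m)" "\<tau> (i+m) \<le> 1" using tau_bounds by auto
      moreover have "of_int (int (W p i m)) - 1 \<le> real m * \<theta> - \<tau> i"
        "real m * \<theta> - \<tau> i \<le> of_int (int (W p i m))"
        using tau_add[of i m] tau_bounds[of "i+m"] by auto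
      ultimately show ?thesis unfolding G_def
        using ceil_stable[OF ti t01, of "real m * \<theta>" "int (W p i m)"] by simp
    qed
  qed
  ultimately show ?thesis using pos by blast
qed

lemma tau_close:
  fixes k :: int
  assumes "\<epsilon> \<le> t" "\<epsilon> \<le> 1 - t" "\<bar>of_int k - real i * \<theta> - L - t\<bar> < \<epsilon>"
  shows "\<bar>\<tau> i - t\<bar> < \<epsilon>"
proof -
  define y where "y = of_int k - real i * \<theta> - L"
  have y: "0 < y" "y < 1" using assms by (auto simp: y_def)
  have "\<tau> i - y = of_int (int (S p i) - k)" by (simp add: \<tau>_def d_def y_def)
  moreover have "\<bar>\<tau> i - y\<bar> < 1" using y tau_bounds[of i] by auto
  ultimately have "\<bar>int (S p i) - k\<bar> < 1" by (metis of_int_abs of_int_less_1_iff)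
  hence "int (S p i) - k = 0" by linarith
  hence "\<tau> i = y" using \<open>\<tau> i - y = _\<close> by simp
  thus ?thesis using assms by (simp add: y_def)
qed

end

lemma count_map_eq: "count_list (map (\<lambda>i. u i = y) xs) True = count_list (map u xs) y"
  by (induction xs) auto

lemma sturm_sseq:
  assumes st: "sturmian_over u x y" and fr: "has_frequency u y \<theta>" and irr: "\<theta> \<notin> \<rat>"
  shows "sseq (\<lambda>i. u i = y) \<theta>"
proof
  fix i j m
  have "factor_at u i m \<in> factors u m" "factor_at u j m \<in> factors u m" by (auto simp: factors_def)
  hence "\<bar>int (count_list (factor_at u i m) y) - int (count_list (factor_at u j m) y)\<bar> \<le> 1"
    using st by (auto simp: sturmian_over_def balanced_def)
  thus "W (\<lambda>i. u i = y) i m \<le> W (\<lambda>i. u i = y) j m + 1"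
    by (simp add: W_def count_map_eq factor_at_def)
next
  show "(\<lambda>n. real (S (\<lambda>i. u i = y) n) / real n) \<longlonglongrightarrow> \<theta>"
    using fr by (simp add: has_frequency_def S_card)
next
  show "\<theta> \<notin> \<rat>" by fact
qed

fun mrg :: "'a \<Rightarrow> 'a list \<Rightarrow> nat list \<Rightarrow> nat list" where
  "mrg a [] z = []"
| "mrg a (x#w) z = (if x = a then 1 # mrg a w z else hd z # mrg a w (tl z))"

lemma upt_Cons': "[i..<i + Suc n] = i # [Suc i..<Suc i + n]"
  using upt_conv_Cons[of i "i + Suc n"] by simp

lemma W_Cons: "W p i (Suc n) = (if p i then 1 else 0) + W p (Suc i) n"
  unfolding W_def upt_Cons' by simp

lemma S_Suc: "S p (Suc i) = S p i + (if p i then 1 else 0)"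
  unfolding S_def by simp

lemma factor_v:
  assumes rng: "\<And>i. u i = a \<or> u i = b" and ab: "a \<noteq> b"
  shows "map (colour u a (\<lambda>_. 1) bs) [i..<i+n]
       = mrg a (map u [i..<i+n]) (map bs [S (\<lambda>i. u i = b) i..<S (\<lambda>i. u i = b) i + W (\<lambda>i. u i = b) i n])"
proof (induction n arbitrary: i)
  case 0 thus ?case by (simp add: W_def)
next
  case (Suc n)
  define pu where "pu = (\<lambda>i. u i = b)"
  have cnt: "card {j. j < i \<and> u j \<noteq> a} = S pu i" for i
  proof -
    have iff: "u j \<noteq> a \<longleftrightarrow> pu j" for j using rng[of j] ab by (auto simp: pu_def)
    have "{j. j < i \<and> u j \<noteq> a} = {j. j < i \<and> pu j}" using iff by blast
    thus ?thesis by (simp add: S_card)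
  qed
  have v: "colour u a (\<lambda>_. 1) bs i = (if u i = a then 1 else bs (S pu i))" for i
    by (simp add: colour_def cnt)
  note up = upt_Cons'[of i n]
  show ?case
  proof (cases "u i = a")
    case True
    hence "\<not> pu i" using ab by (simp add: pu_def)
    hence "S pu (Suc i) = S pu i" "W pu i (Suc n) = W pu (Suc i) n" by (simp_all add: S_Suc W_Cons)
    moreover have "colour u a (\<lambda>_. 1) bs i = 1" using v[of i] True by simp
    ultimately show ?thesis using Suc[of "Suc i"] True unfolding up pu_def[symmetric] by (simp del: upt_Suc)
  next
    case False
    hence pi: "pu i" using rng[of i] by (simp add: pu_def)
    hence e: "S pu (Suc i) = Suc (S pu i)" "W pu i (Suc n) = Suc (W pu (Suc i) n)" by (simp_all add: S_Suc W_Cons)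
    have "[S pu i..<S pu i + W pu i (Suc n)] = S pu i # [S pu (Suc i)..<S pu (Suc i) + W pu (Suc i) n]"
      unfolding e by (simp add: upt_conv_Cons del: upt_Suc)
    moreover have "colour u a (\<lambda>_. 1) bs i = bs (S pu i)" using v[of i] False by simp
    ultimately show ?thesis using Suc[of "Suc i"] False unfolding up pu_def[symmetric] by (simp del: upt_Suc)
  qed
qed

lemma mrg_decode:
  assumes "set w \<subseteq> {a, b}" "a \<noteq> b" "set z \<subseteq> {2, 3}" "length z = count_list w b"
  shows "map (\<lambda>c. if c = 1 then a else b) (mrg a w z) = w \<and> filter (\<lambda>c. c \<noteq> 1) (mrg a w z) = z"
  using assms
proof (induction w arbitrary: z)
  case Nil thus ?case by simp
next
  case (Cons x w)
  show ?case
  proof (cases "x = a")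
    case True thus ?thesis using Cons by auto
  next
    case False
    hence xb: "x = b" using Cons by auto
    then obtain c z' where z: "z = c # z'" using Cons by (cases z) auto
    have "c \<noteq> 1" using Cons z by auto
    thus ?thesis using Cons.IH[of z'] Cons.prems z xb False by auto
  qed
qed

lemma mrg_count:
  assumes "set w \<subseteq> {a, b}" "a \<noteq> b" "set z \<subseteq> {2, 3}" "length z = count_list w b"
  shows "count_list (mrg a w z) c = (if c = 1 then count_list w a else count_list z c)"
  using assms
proof (induction w arbitrary: z)
  case Nil thus ?case by (cases z) auto
next
  case (Cons x w)
  show ?case
  proof (cases "x = a")
    case True thus ?thesis using Cons by auto
  next
    case False
    hence xb: "x = b" using Cons by auto
    then obtain d z' where z: "z = d # z'" using Cons by (cases z) auto
    have "d \<noteq> 1" using Cons z by auto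
    thus ?thesis using Cons.IH[of z'] Cons.prems z xb False by auto
  qed
qed

locale setting =
  fixes u :: "nat \<Rightarrow> 'a" and a b :: 'a and bs :: "nat \<Rightarrow> nat" and \<alpha> \<gamma> :: real
  assumes U: "sseq (\<lambda>i. u i = b) \<alpha>"
    and B: "sseq (\<lambda>j. bs j = 3) \<gamma>"
    and lin_indep: "\<forall>p q r :: rat. of_rat p + of_rat q * \<alpha> + of_rat r * (\<alpha> * \<gamma>) = 0
                       \<longrightarrow> p = 0 \<and> q = 0 \<and> r = 0"
begin

abbreviation "pu \<equiv> (\<lambda>i. u i = b)"
abbreviation "pb \<equiv> (\<lambda>j. bs j = (3::nat))"

sublocale U: sseq pu \<alpha> by (rule U)
sublocale B: sseq pb \<gamma> by (rule B)

definition Rc :: "nat \<Rightarrow> (bool list \<times> bool list) set" where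
  "Rc n = (\<lambda>i. (map pu [i..<i+n], map pb [S pu i..<S pu i + W pu i n])) ` UNIV"

lemma W_count: "W p i n = count_list (map p [i..<i+n]) True"
  by (simp add: W_def)

lemma Rc_eq: "Rc n = Sigma (codes \<alpha> n) (\<lambda>c. codes \<gamma> (count_list c True))"
proof
  show "Rc n \<subseteq> Sigma (codes \<alpha> n) (\<lambda>c. codes \<gamma> (count_list c True))"
  proof
    fix x assume "x \<in> Rc n"
    then obtain i where x: "x = (map pu [i..<i+n], map pb [S pu i..<S pu i + W pu i n])"
      by (auto simp: Rc_def)
    obtain t where t: "gen \<alpha> n t" "map pu [i..<i+n] = code \<alpha> t n" using U.cover by blast
    obtain s where s: "gen \<gamma> (W pu i n) s" "map pb [S pu i..<S pu i + W pu i n] = code \<gamma> s (W pu i n)"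
      using B.cover by blast
    show "x \<in> Sigma (codes \<alpha> n) (\<lambda>c. codes \<gamma> (count_list c True))"
      using t s unfolding x codes_def W_count[of pu i n] by auto
  qed
  show "Sigma (codes \<alpha> n) (\<lambda>c. codes \<gamma> (count_list c True)) \<subseteq> Rc n"
  proof
    fix x assume "x \<in> Sigma (codes \<alpha> n) (\<lambda>c. codes \<gamma> (count_list c True))"
    then obtain t s where t: "gen \<alpha> n t" and s: "gen \<gamma> (count_list (code \<alpha> t n) True) s"
      and x: "x = (code \<alpha> t n, code \<gamma> s (count_list (code \<alpha> t n) True))"
      by (auto simp: codes_def)
    define k where "k = count_list (code \<alpha> t n) True"
    obtain \<delta>1 where d1: "\<delta>1 > 0" "\<delta>1 \<le> t" "\<delta>1 \<le> 1 - t"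
      "\<And>i. \<bar>U.\<tau> i - t\<bar> < \<delta>1 \<Longrightarrow> map pu [i..<i+n] = code \<alpha> t n"
      using U.realize[OF t] by blast
    obtain \<delta>2 where d2: "\<delta>2 > 0" "\<delta>2 \<le> s" "\<delta>2 \<le> 1 - s"
      "\<And>j. \<bar>B.\<tau> j - s\<bar> < \<delta>2 \<Longrightarrow> map pb [j..<j+k] = code \<gamma> s k"
      using B.realize[OF s] unfolding k_def by blast
    define \<epsilon> where "\<epsilon> = min \<delta>1 (\<delta>2/2)"
    have eps: "\<epsilon> > 0" "\<epsilon> \<le> \<delta>1" "2 * \<epsilon> \<le> \<delta>2" using d1 d2 by (auto simp: \<epsilon>_def)
    obtain i k1 k2 where i: "\<bar>real i * \<alpha> - of_int k1 - (- (U.L + t))\<bar> < \<epsilon>"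
      "\<bar>real i * (\<alpha>*\<gamma>) - of_int k2 - (- (t*\<gamma> + U.L*\<gamma> + B.L + s))\<bar> < \<epsilon>"
      using kron2[OF lin_indep eps(1)] by blast
    have "\<bar>of_int k1 - real i * \<alpha> - U.L - t\<bar> < \<epsilon>" using i(1) by linarith
    hence c1: "\<bar>U.\<tau> i - t\<bar> < \<epsilon>" using U.tau_close[of \<epsilon> t k1 i] eps d1 by linarith
    hence f1: "map pu [i..<i+n] = code \<alpha> t n" using d1(4) eps by simp
    hence Wk: "W pu i n = k" unfolding k_def W_count by simp
    define j where "j = S pu i"
    have jr: "real j = U.\<tau> i + real i * \<alpha> + U.L" by (simp add: j_def U.\<tau>_def U.d_def)
    have g: "0 < \<gamma>" "\<gamma> < 1" using B.theta_bounds .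
    have "of_int k2 - real j * \<gamma> - B.L - s
        = - (real i * (\<alpha>*\<gamma>) - of_int k2 - (- (t*\<gamma> + U.L*\<gamma> + B.L + s))) - (U.\<tau> i - t) * \<gamma>"
      unfolding jr by (simp add: algebra_simps)
    moreover have "\<bar>(U.\<tau> i - t) * \<gamma>\<bar> \<le> \<epsilon>"
    proof -
      have "\<bar>(U.\<tau> i - t) * \<gamma>\<bar> = \<bar>U.\<tau> i - t\<bar> * \<gamma>" using g by (simp add: abs_mult)
      also have "\<dots> \<le> \<bar>U.\<tau> i - t\<bar> * 1" using g by (intro mult_left_mono) auto
      finally show ?thesis using c1 by simp
    qed
    ultimately have "\<bar>of_int k2 - real j * \<gamma> - B.L - s\<bar> < \<delta>2" using i(2) eps by linarith
    hence "\<bar>B.\<tau> j - s\<bar> < \<delta>2" using B.tau_close[of \<delta>2 s k2 j] d2 by linarith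
    hence f2: "map pb [j..<j+k] = code \<gamma> s k" using d2(4) by simp
    show "x \<in> Rc n" unfolding Rc_def x k_def[symmetric]
      by (rule image_eqI[of _ _ i]) (use f1 f2 Wk j_def in auto)
  qed
qed

end

lemma count_Eu:
  assumes "a \<noteq> b"
  shows "count_list (map (\<lambda>x. if x then b else a) c) b = count_list c True"
    "count_list (map (\<lambda>x. if x then b else a) c) a = count_list c False"
  using assms by (induction c) auto

lemma count_Eb:
  "count_list (map (\<lambda>x. if x then 3 else 2) c) (3::nat) = count_list c True"
  "count_list (map (\<lambda>x. if x then 3 else 2) c) (2::nat) = count_list c False"
  "x \<noteq> 2 \<Longrightarrow> x \<noteq> 3 \<Longrightarrow> count_list (map (\<lambda>x. if x then 3 else 2) c) (x::nat) = 0"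
  by (induction c) auto

lemma count_TF: "count_list c False = length c - count_list c True"
  by (induction c) (auto simp: Suc_diff_le count_le_length)

lemma count_le_len: "count_list c x \<le> length c"
  by (induction c) auto

lemma length_code[simp]: "length (code \<theta> t n) = n" by (simp add: code_def)

lemma length_codes: "c \<in> codes \<theta> n \<Longrightarrow> length c = n"
  by (auto simp: codes_def)

locale setting2 = setting +
  assumes ab: "a \<noteq> b" and rng: "\<And>i. u i = a \<or> u i = b" and rngb: "\<And>j. bs j = 2 \<or> bs j = 3"
begin

abbreviation "Eu \<equiv> map (\<lambda>x. if x then b else a)"
abbreviation "Eb \<equiv> map (\<lambda>x. if x then 3 else (2::nat))"
abbreviation "v \<equiv> colour u a (\<lambda>_. 1) bs"

lemma inj_Eu: "inj Eu"
proof -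
  have "inj (\<lambda>x. if x then b else a)" using ab by (auto simp: inj_def split: if_splits)
  thus ?thesis by (rule inj_mapI)
qed

lemma inj_Eb: "inj Eb"
proof -
  have "inj (\<lambda>x. if x then 3 else (2::nat))" by (auto simp: inj_def split: if_splits)
  thus ?thesis by (rule inj_mapI)
qed

lemma e1: "map u xs = Eu (map pu xs)"
proof -
  have "map u xs = map (\<lambda>i. if u i = b then b else a) xs"
    by (rule map_cong[OF refl]) (use rng in auto)
  thus ?thesis by (simp add: o_def)
qed

lemma e2: "map bs xs = Eb (map pb xs)"
proof -
  have "map bs xs = map (\<lambda>i. if bs i = 3 then 3 else 2) xs"
    by (rule map_cong[OF refl]) (use rngb in auto)
  thus ?thesis by (simp add: o_def)
qed

definition mk :: "bool list \<times> bool list \<Rightarrow> nat list" where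
  "mk x = mrg a (Eu (fst x)) (Eb (snd x))"

lemma Rc_len: "x \<in> Rc n \<Longrightarrow> length (snd x) = count_list (fst x) True \<and> length (fst x) = n"
  by (auto simp: Rc_def W_def)

lemma factors_v: "factors v n = mk ` Rc n"
proof -
  have "factor_at v i n = mk (map pu [i..<i+n], map pb [S pu i..<S pu i + W pu i n])" for i
    unfolding factor_at_def mk_def using factor_v[OF rng ab, where bs=bs and i=i and n=n] by (simp add: e1 e2)
  thus ?thesis by (auto simp: factors_def Rc_def)
qed

lemma mk_props:
  assumes "x \<in> Rc n"
  shows "set (Eu (fst x)) \<subseteq> {a, b}" "set (Eb (snd x)) \<subseteq> {2, 3}"
    "length (Eb (snd x)) = count_list (Eu (fst x)) b"
  using Rc_len[OF assms] count_Eu[OF ab] by auto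

lemma inj_mk: "inj_on mk (Rc n)"
proof (rule inj_onI)
  fix x y assume x: "x \<in> Rc n" and y: "y \<in> Rc n" and e: "mk x = mk y"
  have "Eu (fst x) = Eu (fst y)" "Eb (snd x) = Eb (snd y)"
    using mrg_decode[OF mk_props(1)[OF x] ab mk_props(2,3)[OF x]]
      mrg_decode[OF mk_props(1)[OF y] ab mk_props(2,3)[OF y]] e unfolding mk_def by metis+
  hence "fst x = fst y" "snd x = snd y" using inj_Eu inj_Eb by (auto dest: injD)
  thus "x = y" by (simp add: prod_eq_iff)
qed

lemma card_factors_v: "card (factors v n) = card (Rc n)"
  unfolding factors_v by (rule card_image[OF inj_mk])

end

context setting2 begin
lemma fin_codes: "\<theta> \<notin> \<rat> \<Longrightarrow> 0 < \<theta> \<Longrightarrow> \<theta> < 1 \<Longrightarrow> finite (codes \<theta> k)"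
  using card_codes[of \<theta> k] by (metis card.infinite nat.distinct(1) Suc_eq_plus1)

lemma card_Rc: "card (Rc n) = (\<Sum>c\<in>codes \<alpha> n. count_list c True + 1)"
proof -
  have "card (Rc n) = (\<Sum>c\<in>codes \<alpha> n. card (codes \<gamma> (count_list c True)))"
    unfolding Rc_eq using fin_codes U.irr U.theta_bounds B.irr B.theta_bounds by (subst card_SigmaI) auto
  also have "\<dots> = (\<Sum>c\<in>codes \<alpha> n. count_list c True + 1)"
    using card_codes[OF B.theta_bounds B.irr] by simp
  finally show ?thesis .
qed

lemma fst_Rc: "fst ` Rc n = codes \<alpha> n"
proof -
  have "codes \<gamma> k \<noteq> {}" for k using card_codes[OF B.theta_bounds B.irr, of k] by auto
  thus ?thesis unfolding Rc_eq by force
qed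

lemma factors_u: "factors u n = Eu ` codes \<alpha> n"
proof -
  have "factors u n = Eu ` fst ` Rc n"
    by (auto simp: factors_def Rc_def factor_at_def e1 image_image)
  thus ?thesis by (simp add: fst_Rc)
qed

lemma ceil_floor:
  assumes "n \<ge> 1"
  shows "\<lceil>real n * \<alpha>\<rceil> = \<lfloor>real n * \<alpha>\<rfloor> + 1" "\<lfloor>(1 - \<alpha>) * real n\<rfloor> = int n - \<lceil>real n * \<alpha>\<rceil>"
proof -
  have "real n * \<alpha> \<notin> \<int>" using irr_mult_not_int[OF U.irr] assms by simp
  hence "real n * \<alpha> \<noteq> of_int \<lfloor>real n * \<alpha>\<rfloor>" by (metis Ints_of_int)
  thus "\<lceil>real n * \<alpha>\<rceil> = \<lfloor>real n * \<alpha>\<rfloor> + 1" by (simp add: ceiling_altdef)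
  have e: "(1 - \<alpha>) * real n = (- (real n * \<alpha>)) + of_int (int n)" by (simp add: algebra_simps)
  show "\<lfloor>(1 - \<alpha>) * real n\<rfloor> = int n - \<lceil>real n * \<alpha>\<rceil>"
    unfolding e ceiling_def floor_add_int[symmetric] by simp
qed

lemma filter_image: "{w \<in> f ` C. P w} = f ` {c \<in> C. P (f c)}"
  by auto

lemma P_count_eq:
  assumes "n \<ge> 1"
  shows "P_count u a b \<alpha> n = card {c\<in>codes \<alpha> n. int (count_list c True) = \<lceil>real n * \<alpha>\<rceil>}"
proof -
  have "{c\<in>codes \<alpha> n. int (count_list (Eu c) a) = \<lfloor>(1 - \<alpha>) * real n\<rfloor> \<and> int (count_list (Eu c) b) = \<lceil>real n * \<alpha>\<rceil>}
      = {c\<in>codes \<alpha> n. int (count_list c True) = \<lceil>real n * \<alpha>\<rceil>}"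
  proof (rule Collect_cong, rule iffI)
    fix c assume "c \<in> codes \<alpha> n \<and> int (count_list c True) = \<lceil>real n * \<alpha>\<rceil>"
    hence c: "c \<in> codes \<alpha> n" "int (count_list c True) = \<lceil>real n * \<alpha>\<rceil>" by auto
    have "int (count_list c False) = \<lfloor>(1 - \<alpha>) * real n\<rfloor>"
      using length_codes[OF c(1)] count_TF[of c] count_le_len[of c True] ceil_floor(2)[OF assms] c(2) by simp
    thus "c \<in> codes \<alpha> n \<and> int (count_list (Eu c) a) = \<lfloor>(1 - \<alpha>) * real n\<rfloor> \<and> int (count_list (Eu c) b) = \<lceil>real n * \<alpha>\<rceil>"
      using c count_Eu[OF ab, of c] by simp
  next
    fix c assume "c \<in> codes \<alpha> n \<and> int (count_list (Eu c) a) = \<lfloor>(1 - \<alpha>) * real n\<rfloor> \<and> int (count_list (Eu c) b) = \<lceil>real n * \<alpha>\<rceil>"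
    thus "c \<in> codes \<alpha> n \<and> int (count_list c True) = \<lceil>real n * \<alpha>\<rceil>" using count_Eu[OF ab, of c] by simp
  qed
  thus ?thesis unfolding P_count_def factors_u filter_image
    by (simp add: card_image[OF inj_on_subset[OF inj_Eu subset_UNIV]])
qed

theorem complexity:
  assumes "n \<ge> 1"
  shows "int (factor_complexity v n) = int (P_count u a b \<alpha> n) + (int n + 1) * \<lceil>real n * \<alpha>\<rceil>"
proof -
  have fin: "finite (codes \<alpha> n)" using fin_codes U.irr U.theta_bounds by blast
  have cc: "card (codes \<alpha> n) = n + 1" using card_codes[OF U.theta_bounds U.irr] .
  have each: "int (count_list c True + 1) = \<lceil>real n * \<alpha>\<rceil> + of_bool (int (count_list c True) = \<lceil>real n * \<alpha>\<rceil>)"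
    if "c \<in> codes \<alpha> n" for c
    using codes_count[OF U.theta_bounds U.irr that] ceil_floor(1)[OF assms] by auto
  have "int (factor_complexity v n) = (\<Sum>c\<in>codes \<alpha> n. int (count_list c True + 1))"
    unfolding factor_complexity_def card_factors_v card_Rc by simp
  also have "\<dots> = (\<Sum>c\<in>codes \<alpha> n. \<lceil>real n * \<alpha>\<rceil> + of_bool (int (count_list c True) = \<lceil>real n * \<alpha>\<rceil>))"
    using each by (rule sum.cong[OF refl])
  also have "\<dots> = (int n + 1) * \<lceil>real n * \<alpha>\<rceil> + int (card {c\<in>codes \<alpha> n. int (count_list c True) = \<lceil>real n * \<alpha>\<rceil>})"
  proof -
    have "(\<Sum>c\<in>codes \<alpha> n. \<lceil>real n * \<alpha>\<rceil> + of_bool (int (count_list c True) = \<lceil>real n * \<alpha>\<rceil>))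
        = (\<Sum>c\<in>codes \<alpha> n. \<lceil>real n * \<alpha>\<rceil>) + (\<Sum>c\<in>codes \<alpha> n. of_bool (int (count_list c True) = \<lceil>real n * \<alpha>\<rceil>))"
      by (rule sum.distrib)
    also have "(\<Sum>c\<in>codes \<alpha> n. \<lceil>real n * \<alpha>\<rceil>) = (int n + 1) * \<lceil>real n * \<alpha>\<rceil>"
      using cc by simp
    also have "(\<Sum>c\<in>codes \<alpha> n. of_bool (int (count_list c True) = \<lceil>real n * \<alpha>\<rceil>) :: int)
        = int (card (codes \<alpha> n \<inter> {c. int (count_list c True) = \<lceil>real n * \<alpha>\<rceil>}))"
      using fin by (simp only: sum_of_bool_eq[OF fin fin])
    also have "codes \<alpha> n \<inter> {c. int (count_list c True) = \<lceil>real n * \<alpha>\<rceil>} = {c\<in>codes \<alpha> n. int (count_list c True) = \<lceil>real n * \<alpha>\<rceil>}"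
      by blast
    finally show ?thesis .
  qed
  finally show ?thesis using P_count_eq[OF assms] by simp
qed

end

definition pk :: "nat \<Rightarrow> nat \<Rightarrow> nat \<Rightarrow> nat \<Rightarrow> nat" where
  "pk n k j = (\<lambda>c. if c = 1 then n - k else if c = 3 then j else if c = 2 then k - j else 0)"

context setting2
begin

lemma parikh_mk:
  assumes x: "x \<in> Rc n"
  shows "parikh (mk x) = pk n (count_list (fst x) True) (count_list (snd x) True)"
proof
  fix c :: nat
  have l: "length (snd x) = count_list (fst x) True" "length (fst x) = n" using Rc_len[OF x] by auto
  have "count_list (mk x) c = (if c = 1 then count_list (Eu (fst x)) a else count_list (Eb (snd x)) c)"
    unfolding mk_def by (rule mrg_count[OF mk_props(1)[OF x] ab mk_props(2,3)[OF x]])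
  thus "parikh (mk x) c = pk n (count_list (fst x) True) (count_list (snd x) True) c"
    unfolding parikh_def pk_def using count_Eu[OF ab] count_Eb count_TF l by auto
qed

lemma count_codes_nat:
  assumes "0 < \<theta>" "\<theta> < 1" "\<theta> \<notin> \<rat>" "c \<in> codes \<theta> k"
  shows "count_list c True = nat \<lfloor>real k * \<theta>\<rfloor> \<or> count_list c True = nat \<lfloor>real k * \<theta>\<rfloor> + 1"
proof -
  have "0 \<le> \<lfloor>real k * \<theta>\<rfloor>" using assms by simp
  thus ?thesis using codes_count[OF assms] by linarith
qed

lemma realized_nat:
  assumes "0 < \<theta>" "\<theta> < 1" "\<theta> \<notin> \<rat>" "k \<ge> 1"
  shows "\<exists>c\<in>codes \<theta> k. count_list c True = nat \<lfloor>real k * \<theta>\<rfloor>"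
    "\<exists>c\<in>codes \<theta> k. count_list c True = nat \<lfloor>real k * \<theta>\<rfloor> + 1"
proof -
  have "0 \<le> \<lfloor>real k * \<theta>\<rfloor>" using assms by simp
  obtain c where c: "c \<in> codes \<theta> k" "int (count_list c True) = \<lfloor>real k * \<theta>\<rfloor>"
    using codes_count_realized(1)[OF assms] by blast
  have "count_list c True = nat \<lfloor>real k * \<theta>\<rfloor>" by (simp add: c(2)[symmetric])
  thus "\<exists>c\<in>codes \<theta> k. count_list c True = nat \<lfloor>real k * \<theta>\<rfloor>" using c(1) by blast
  obtain c where c: "c \<in> codes \<theta> k" "int (count_list c True) = \<lfloor>real k * \<theta>\<rfloor> + 1"
    using codes_count_realized(2)[OF assms] by blast
  have "count_list c True = nat \<lfloor>real k * \<theta>\<rfloor> + 1" using c(2) \<open>0 \<le> _\<close> by linarith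
  thus "\<exists>c\<in>codes \<theta> k. count_list c True = nat \<lfloor>real k * \<theta>\<rfloor> + 1" using c(1) by blast
qed

theorem abelian:
  assumes n1: "1 \<le> real n * \<alpha>"
  shows "abelian_complexity v n = 4"
proof -
  have al: "0 < \<alpha>" "\<alpha> < 1" using U.theta_bounds .
  have ga: "0 < \<gamma>" "\<gamma> < 1" using B.theta_bounds .
  have n0: "n \<ge> 1" using n1 al by (cases n) auto
  define cnt where "cnt = (\<lambda>x::bool list \<times> bool list. (count_list (fst x) True, count_list (snd x) True))"
  have "abelian_complexity v n = card ((parikh \<circ> mk) ` Rc n)"
    unfolding abelian_complexity_def factors_v by (simp add: image_comp)
  also have "\<dots> = card (cnt ` Rc n)"
  proof (rule card_image_cong)
    fix x y assume x: "x \<in> Rc n" and y: "y \<in> Rc n"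
    have bx: "count_list (fst x) True \<le> n" "count_list (fst y) True \<le> n"
      using Rc_len[OF x] Rc_len[OF y] count_le_len by metis+
    show "(parikh \<circ> mk) x = (parikh \<circ> mk) y \<longleftrightarrow> cnt x = cnt y"
    proof
      assume "(parikh \<circ> mk) x = (parikh \<circ> mk) y"
      hence e: "pk n (count_list (fst x) True) (count_list (snd x) True) = pk n (count_list (fst y) True) (count_list (snd y) True)"
        using parikh_mk[OF x] parikh_mk[OF y] by simp
      have "n - count_list (fst x) True = n - count_list (fst y) True" using fun_cong[OF e, of 1] by (simp add: pk_def)
      moreover have "count_list (snd x) True = count_list (snd y) True" using fun_cong[OF e, of 3] by (simp add: pk_def)
      ultimately show "cnt x = cnt y" using bx by (simp add: cnt_def)
    next
      assume "cnt x = cnt y"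
      thus "(parikh \<circ> mk) x = (parikh \<circ> mk) y" using parikh_mk[OF x] parikh_mk[OF y] by (simp add: cnt_def)
    qed
  qed
  also have "cnt ` Rc n = {(nat \<lfloor>real n * \<alpha>\<rfloor>, nat \<lfloor>real (nat \<lfloor>real n * \<alpha>\<rfloor>) * \<gamma>\<rfloor>),
      (nat \<lfloor>real n * \<alpha>\<rfloor>, nat \<lfloor>real (nat \<lfloor>real n * \<alpha>\<rfloor>) * \<gamma>\<rfloor> + 1),
      (nat \<lfloor>real n * \<alpha>\<rfloor> + 1, nat \<lfloor>real (nat \<lfloor>real n * \<alpha>\<rfloor> + 1) * \<gamma>\<rfloor>),
      (nat \<lfloor>real n * \<alpha>\<rfloor> + 1, nat \<lfloor>real (nat \<lfloor>real n * \<alpha>\<rfloor> + 1) * \<gamma>\<rfloor> + 1)}" (is "_ = ?Q")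
  proof
    show "cnt ` Rc n \<subseteq> ?Q"
    proof
      fix y assume "y \<in> cnt ` Rc n"
      then obtain c1 c2 where c1: "c1 \<in> codes \<alpha> n" and c2: "c2 \<in> codes \<gamma> (count_list c1 True)"
        and y: "y = (count_list c1 True, count_list c2 True)"
        unfolding Rc_eq cnt_def by auto
      from count_codes_nat[OF al U.irr c1] show "y \<in> ?Q"
      proof (elim disjE)
        assume h: "count_list c1 True = nat \<lfloor>real n * \<alpha>\<rfloor>"
        from count_codes_nat[OF ga B.irr c2] show ?thesis
          by (elim disjE) (simp_all add: y h)
      next
        assume h: "count_list c1 True = nat \<lfloor>real n * \<alpha>\<rfloor> + 1"
        from count_codes_nat[OF ga B.irr c2] show ?thesis
          by (elim disjE) (simp_all add: y h)
      qed
    qed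
    show "?Q \<subseteq> cnt ` Rc n"
    proof -
      have K1: "nat \<lfloor>real n * \<alpha>\<rfloor> \<ge> 1" using n1 by linarith
      have mem: "(k, j) \<in> cnt ` Rc n" if "c1 \<in> codes \<alpha> n" "c2 \<in> codes \<gamma> (count_list c1 True)"
        "count_list c1 True = k" "count_list c2 True = j" for c1 c2 k j
        using that unfolding Rc_eq cnt_def by (intro image_eqI[of _ _ "(c1, c2)"]) auto
      have gen: "(k, nat \<lfloor>real k * \<gamma>\<rfloor>) \<in> cnt ` Rc n \<and> (k, nat \<lfloor>real k * \<gamma>\<rfloor> + 1) \<in> cnt ` Rc n"
        if hk: "\<exists>c1\<in>codes \<alpha> n. count_list c1 True = k" "k \<ge> 1" for k
      proof -
        obtain c1 where c1: "c1 \<in> codes \<alpha> n" "count_list c1 True = k" using hk(1) by blast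
        obtain c2 where c2: "c2 \<in> codes \<gamma> k" "count_list c2 True = nat \<lfloor>real k * \<gamma>\<rfloor>"
          using realized_nat(1)[OF ga B.irr hk(2)] by blast
        obtain c3 where c3: "c3 \<in> codes \<gamma> k" "count_list c3 True = nat \<lfloor>real k * \<gamma>\<rfloor> + 1"
          using realized_nat(2)[OF ga B.irr hk(2)] by blast
        show ?thesis using mem[of c1 c2] mem[of c1 c3] c1 c2 c3 by auto
      qed
      have "nat \<lfloor>real n * \<alpha>\<rfloor> + 1 \<ge> 1" by simp
      note g1 = gen[OF realized_nat(1)[OF al U.irr n0] K1] and g2 = gen[OF realized_nat(2)[OF al U.irr n0] this]
      show ?thesis using g1 g2 by (simp only: insert_subset empty_subsetI)
    qed
  qed
  also have "card ?Q = 4" by simp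
  finally show ?thesis .
qed

end

theorem theorem3:
  fixes u :: "nat \<Rightarrow> 'a" and a b :: 'a and bs :: "nat \<Rightarrow> nat"
    and \<alpha> \<gamma> :: real
  assumes u_sturm: "sturmian_over u a b"
    and u_freq: "has_frequency u b \<alpha>"
    and b_sturm: "sturmian_over bs 2 3"
    and b_freq: "has_frequency bs 3 \<gamma>"
    and lin_indep: "\<forall>p q r :: rat. of_rat p + of_rat q * \<alpha> + of_rat r * (\<alpha> * \<gamma>) = 0
                       \<longrightarrow> p = 0 \<and> q = 0 \<and> r = 0"
  shows "(\<forall>n::nat. n \<ge> 1 \<longrightarrow>
            int (factor_complexity (colour u a (\<lambda>_. 1) bs) n)
              = int (P_count u a b \<alpha> n) + (int n + 1) * \<lceil>real n * \<alpha>\<rceil>)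
       \<and> (\<forall>n::nat. int n \<ge> \<lceil>1 / \<alpha>\<rceil> \<longrightarrow>
            abelian_complexity (colour u a (\<lambda>_. 1) bs) n = 4)"
proof -
  have irra: "\<alpha> \<notin> \<rat>"
  proof
    assume "\<alpha> \<in> \<rat>"
    then obtain q where q: "\<alpha> = of_rat q" by (auto elim: Rats_cases)
    have "of_rat (-q) + of_rat 1 * \<alpha> + of_rat 0 * (\<alpha> * \<gamma>) = 0" using q by (simp add: of_rat_minus)
    from lin_indep[rule_format, OF this] show False by simp
  qed
  have irrg: "\<gamma> \<notin> \<rat>"
  proof
    assume "\<gamma> \<in> \<rat>"
    then obtain g where g: "\<gamma> = of_rat g" by (auto elim: Rats_cases)
    have "of_rat 0 + of_rat g * \<alpha> + of_rat (-1) * (\<alpha> * \<gamma>) = 0" using g by (simp add: of_rat_minus)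
    from lin_indep[rule_format, OF this] show False by simp
  qed
  have ab: "a \<noteq> b" using u_sturm by (simp add: sturmian_over_def)
  have rng: "u i = a \<or> u i = b" for i using u_sturm by (auto simp: sturmian_over_def)
  have rngb: "bs j = 2 \<or> bs j = 3" for j using b_sturm by (auto simp: sturmian_over_def)
  have S2: "setting2 u a b bs \<alpha> \<gamma>"
    unfolding setting2_def setting_def setting2_axioms_def
    using sturm_sseq[OF u_sturm u_freq irra] sturm_sseq[OF b_sturm b_freq irrg] lin_indep ab rng rngb
    by blast
  interpret setting2 u a b bs \<alpha> \<gamma> by (rule S2)
  show ?thesis
  proof (intro conjI allI impI)
    fix n :: nat assume "n \<ge> 1"
    thus "int (factor_complexity (colour u a (\<lambda>_. 1) bs) n)
              = int (P_count u a b \<alpha> n) + (int n + 1) * \<lceil>real n * \<alpha>\<rceil>"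
      by (rule complexity)
  next
    fix n :: nat assume n: "int n \<ge> \<lceil>1 / \<alpha>\<rceil>"
    have al: "0 < \<alpha>" using U.theta_bounds by simp
    have "1 / \<alpha> \<le> of_int (int n)" using n by (simp only: ceiling_le_iff[symmetric])
    hence "1 / \<alpha> \<le> real n" by simp
    hence "1 \<le> real n * \<alpha>" using al by (simp add: divide_le_eq)
    thus "abelian_complexity (colour u a (\<lambda>_. 1) bs) n = 4" by (rule abelian)
  qed
qed

end
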